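(* For any potentials $W$ and $\Theta$ and any $0<\kappa'<\kappa$, $$\|\mathrm{ad}_W\Theta\|_{\kappa'}\leq\frac{18}{\kappa'(\kappa-\kappa')}\|\Theta\|_\kappa\|W\|_\kappa.$$
   Context: $\Lambda$ is a finite set of sites, each carrying a finite-dimensional Hilbert space; $\|\cdot\|$ is the operator norm. A potential $Q$ is a family of operators $Q_Z$, $Z\subseteq\Lambda$, with $Q_Z$ supported on $Z$. Norm: $\|Q\|_\kappa=\sup_{x\in\Lambda}\sum_{Z\ni x}e^{\kappa|Z|}\|Q_Z\|$. Commutator of potentials: $(\mathrm{ad}_W\Theta)_Z=\sum_{Z_1\cap Z_2\neq\emptyset,Z_1\cup Z_2=Z}[W_{Z_1},\Theta_{Z_2}]$. *)

theory Defs
  imports "HOL-Analysis.Analysis"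
begin

text \<open>Site x carries the Hilbert space
  C^(d x). The total Hilbert space is the tensor product, realised as functions on the finite
  set of configurations sigma with sigma x < d x (the standard product basis).
  Operators are given by their matrix kernels in this basis.\<close>

type_synonym 's cfg = "'s \<Rightarrow> nat"
type_synonym 's oper = "'s cfg \<Rightarrow> 's cfg \<Rightarrow> complex"
type_synonym 's potential = "'s set \<Rightarrow> 's oper"

definition configs :: "('s \<Rightarrow> nat) \<Rightarrow> 's cfg set" where
  "configs d = {\<sigma>. \<forall>x. \<sigma> x < d x}"

definition apply_op :: "('s \<Rightarrow> nat) \<Rightarrow> 's oper \<Rightarrow> ('s cfg \<Rightarrow> complex) \<Rightarrow> ('s cfg \<Rightarrow> complex)" where
  "apply_op d A v = (\<lambda>\<sigma>. \<Sum>\<tau>\<in>configs d. A \<sigma> \<tau> * v \<tau>)"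

definition vnorm :: "('s \<Rightarrow> nat) \<Rightarrow> ('s cfg \<Rightarrow> complex) \<Rightarrow> real" where
  "vnorm d v = sqrt (\<Sum>\<sigma>\<in>configs d. (cmod (v \<sigma>))\<^sup>2)"

definition opnorm :: "('s \<Rightarrow> nat) \<Rightarrow> 's oper \<Rightarrow> real" where
  "opnorm d A = Sup {vnorm d (apply_op d A v) | v. vnorm d v \<le> 1}"

definition op_mult :: "('s \<Rightarrow> nat) \<Rightarrow> 's oper \<Rightarrow> 's oper \<Rightarrow> 's oper" where
  "op_mult d A B = (\<lambda>\<sigma> \<tau>. \<Sum>\<rho>\<in>configs d. A \<sigma> \<rho> * B \<rho> \<tau>)"

definition commutator :: "('s \<Rightarrow> nat) \<Rightarrow> 's oper \<Rightarrow> 's oper \<Rightarrow> 's oper" where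
  "commutator d A B = (\<lambda>\<sigma> \<tau>. op_mult d A B \<sigma> \<tau> - op_mult d B A \<sigma> \<tau>)"

text \<open>A is supported on Z, i.e. A = A_Z \<otimes> 1 on the complement of Z: the kernel vanishes unless
  the configurations agree off Z, and otherwise only depends on their restrictions to Z.\<close>
definition supported_on :: "('s \<Rightarrow> nat) \<Rightarrow> 's set \<Rightarrow> 's oper \<Rightarrow> bool" where
  "supported_on d Z A \<longleftrightarrow>
     (\<forall>\<sigma>\<in>configs d. \<forall>\<tau>\<in>configs d. A \<sigma> \<tau> \<noteq> 0 \<longrightarrow> (\<forall>x. x \<notin> Z \<longrightarrow> \<sigma> x = \<tau> x)) \<and>
     (\<forall>\<sigma>\<in>configs d. \<forall>\<tau>\<in>configs d. \<forall>\<sigma>'\<in>configs d. \<forall>\<tau>'\<in>configs d.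
        (\<forall>x. x \<notin> Z \<longrightarrow> \<sigma> x = \<tau> x) \<longrightarrow> (\<forall>x. x \<notin> Z \<longrightarrow> \<sigma>' x = \<tau>' x) \<longrightarrow>
        (\<forall>x\<in>Z. \<sigma> x = \<sigma>' x \<and> \<tau> x = \<tau>' x) \<longrightarrow> A \<sigma> \<tau> = A \<sigma>' \<tau>')"

definition is_potential :: "('s \<Rightarrow> nat) \<Rightarrow> 's potential \<Rightarrow> bool" where
  "is_potential d Q \<longleftrightarrow> (\<forall>Z. supported_on d Z (Q Z))"

definition pot_norm :: "('s::finite \<Rightarrow> nat) \<Rightarrow> real \<Rightarrow> 's potential \<Rightarrow> real" where
  "pot_norm d \<kappa> Q = (SUP x. \<Sum>Z\<in>{Z. x \<in> Z}. exp (\<kappa> * real (card Z)) * opnorm d (Q Z))"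

definition ad_pot :: "('s::finite \<Rightarrow> nat) \<Rightarrow> 's potential \<Rightarrow> 's potential \<Rightarrow> 's potential" where
  "ad_pot d W \<Theta> Z = (\<lambda>\<sigma> \<tau>. \<Sum>(Z1, Z2)\<in>{(Z1, Z2). Z1 \<inter> Z2 \<noteq> {} \<and> Z1 \<union> Z2 = Z}.
                         commutator d (W Z1) (\<Theta> Z2) \<sigma> \<tau>)"

end

theory Submission imports Defs begin

lemma vnorm_L2: "vnorm d v = L2_set (\<lambda>\<sigma>. cmod (v \<sigma>)) (configs d)"
  by (simp add: vnorm_def L2_set_def)

lemma finite_configs: "finite (configs (d :: 's::finite \<Rightarrow> nat))"
proof -
  have "configs d = Pi\<^sub>E UNIV (\<lambda>x. {..<d x})"
    by (auto simp: configs_def PiE_UNIV_domain)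
  then show ?thesis by (simp add: finite_PiE)
qed

lemma vnorm_nonneg: "0 \<le> vnorm d v"
  by (simp add: vnorm_def sum_nonneg)

lemma vnorm_add: "vnorm d (\<lambda>\<sigma>. u \<sigma> + w \<sigma>) \<le> vnorm d u + vnorm d w"
proof -
  have "vnorm d (\<lambda>\<sigma>. u \<sigma> + w \<sigma>) \<le> L2_set (\<lambda>\<sigma>. cmod (u \<sigma>) + cmod (w \<sigma>)) (configs d)"
    unfolding vnorm_L2 by (rule L2_set_mono) (auto simp: norm_triangle_ineq)
  also have "\<dots> \<le> vnorm d u + vnorm d w"
    unfolding vnorm_L2 by (rule L2_set_triangle_ineq)
  finally show ?thesis .
qed

lemma vnorm_diff: "vnorm d (\<lambda>\<sigma>. u \<sigma> - w \<sigma>) \<le> vnorm d u + vnorm d w"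
proof -
  have "vnorm d (\<lambda>\<sigma>. u \<sigma> - w \<sigma>) \<le> L2_set (\<lambda>\<sigma>. cmod (u \<sigma>) + cmod (w \<sigma>)) (configs d)"
    unfolding vnorm_L2 by (rule L2_set_mono) (auto simp: norm_triangle_ineq4)
  also have "\<dots> \<le> vnorm d u + vnorm d w"
    unfolding vnorm_L2 by (rule L2_set_triangle_ineq)
  finally show ?thesis .
qed

lemma vnorm_scale: "vnorm d (\<lambda>\<sigma>. c * v \<sigma>) = cmod c * vnorm d v"
  unfolding vnorm_L2 by (simp add: L2_set_right_distrib norm_mult)

lemma apply_op_scale: "apply_op d A (\<lambda>\<tau>. c * v \<tau>) = (\<lambda>\<sigma>. c * apply_op d A v \<sigma>)"
  by (auto simp: apply_op_def sum_distrib_left intro!: sum.cong)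

lemma apply_op_bound:
  fixes d :: "'s::finite \<Rightarrow> nat"
  shows "vnorm d (apply_op d A v) \<le> (\<Sum>\<sigma>\<in>configs d. \<Sum>\<tau>\<in>configs d. cmod (A \<sigma> \<tau>)) * vnorm d v"
proof -
  have fin: "finite (configs d)" by (rule finite_configs)
  have pt: "cmod (apply_op d A v \<sigma>) \<le> (\<Sum>\<tau>\<in>configs d. cmod (A \<sigma> \<tau>)) * vnorm d v" for \<sigma>
  proof -
    have "cmod (apply_op d A v \<sigma>) \<le> (\<Sum>\<tau>\<in>configs d. cmod (A \<sigma> \<tau>) * cmod (v \<tau>))"
      unfolding apply_op_def by (rule order_trans[OF norm_sum]) (simp add: norm_mult)
    also have "\<dots> \<le> (\<Sum>\<tau>\<in>configs d. cmod (A \<sigma> \<tau>) * vnorm d v)"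
      apply (rule sum_mono, rule mult_left_mono)
      using member_le_L2_set[OF fin] by (auto simp: vnorm_L2)
    finally show ?thesis by (simp add: sum_distrib_right)
  qed
  have "vnorm d (apply_op d A v) \<le> (\<Sum>\<sigma>\<in>configs d. cmod (apply_op d A v \<sigma>))"
    unfolding vnorm_L2 by (rule L2_set_le_sum) simp
  also have "\<dots> \<le> (\<Sum>\<sigma>\<in>configs d. (\<Sum>\<tau>\<in>configs d. cmod (A \<sigma> \<tau>)) * vnorm d v)"
    by (rule sum_mono) (rule pt)
  finally show ?thesis by (simp add: sum_distrib_right)
qed

lemma opnorm_bdd:
  fixes d :: "'s::finite \<Rightarrow> nat"
  shows "bdd_above {vnorm d (apply_op d A v) | v. vnorm d v \<le> 1}"
proof -
  let ?K = "(\<Sum>\<sigma>\<in>configs d. \<Sum>\<tau>\<in>configs d. cmod (A \<sigma> \<tau>))"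
  have K0: "0 \<le> ?K" by (intro sum_nonneg) auto
  show ?thesis
  proof (rule bdd_aboveI[where M = ?K], clarify)
    fix v assume "vnorm d v \<le> 1"
    then have "?K * vnorm d v \<le> ?K" using K0 by (simp add: mult_left_le)
    then show "vnorm d (apply_op d A v) \<le> ?K" using apply_op_bound[of d A v] by linarith
  qed
qed

lemma opnorm_upper:
  fixes d :: "'s::finite \<Rightarrow> nat"
  assumes "vnorm d v \<le> 1"
  shows "vnorm d (apply_op d A v) \<le> opnorm d A"
  unfolding opnorm_def by (rule cSup_upper[OF _ opnorm_bdd]) (use assms in blast)

lemma opnorm_nonneg:
  fixes d :: "'s::finite \<Rightarrow> nat"
  shows "0 \<le> opnorm d A"
proof -
  have "vnorm d (\<lambda>_. 0) \<le> 1" by (simp add: vnorm_def)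
  from opnorm_upper[OF this, of A] show ?thesis using vnorm_nonneg[of d] by (meson order_trans)
qed

lemma opnorm_apply:
  fixes d :: "'s::finite \<Rightarrow> nat"
  shows "vnorm d (apply_op d A v) \<le> opnorm d A * vnorm d v"
proof (cases "vnorm d v = 0")
  case True
  then show ?thesis using apply_op_bound[of d A v] vnorm_nonneg[of d "apply_op d A v"] by simp
next
  case False
  define n where "n = vnorm d v"
  have n0: "n > 0" using False vnorm_nonneg[of d v] n_def by simp
  define u where "u = (\<lambda>\<tau>. complex_of_real (1 / n) * v \<tau>)"
  have "vnorm d u = cmod (complex_of_real (1 / n)) * vnorm d v" unfolding u_def by (rule vnorm_scale)
  moreover have "cmod (complex_of_real (1 / n)) = 1 / n" using n0 by (simp only: norm_of_real) simp
  ultimately have "vnorm d u = 1" using n0 by (simp add: n_def)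
  then have up: "vnorm d (apply_op d A u) \<le> opnorm d A" by (intro opnorm_upper) simp
  have "vnorm d (apply_op d A u) = cmod (complex_of_real (1 / n)) * vnorm d (apply_op d A v)"
    unfolding u_def apply_op_scale by (rule vnorm_scale)
  also have "\<dots> = (1/n) * vnorm d (apply_op d A v)" using n0 by (simp only: norm_of_real) simp
  finally have "(1/n) * vnorm d (apply_op d A v) \<le> opnorm d A" using up by simp
  then have "vnorm d (apply_op d A v) \<le> n * opnorm d A"
    using n0 by (simp add: field_simps)
  then show ?thesis by (simp add: n_def mult.commute)
qed

lemma opnorm_le:
  fixes d :: "'s::finite \<Rightarrow> nat"
  assumes "\<And>v. vnorm d v \<le> 1 \<Longrightarrow> vnorm d (apply_op d A v) \<le> C"
  shows "opnorm d A \<le> C"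
proof -
  have "vnorm d (\<lambda>_. 0) \<le> 1" by (simp add: vnorm_def)
  then have ne: "{vnorm d (apply_op d A v) | v. vnorm d v \<le> 1} \<noteq> {}" by blast
  show ?thesis unfolding opnorm_def by (rule cSup_least[OF ne]) (use assms in blast)
qed

lemma opnorm_sum:
  fixes d :: "'s::finite \<Rightarrow> nat"
  assumes "finite I"
  shows "opnorm d (\<lambda>\<sigma> \<tau>. \<Sum>i\<in>I. F i \<sigma> \<tau>) \<le> (\<Sum>i\<in>I. opnorm d (F i))"
proof (rule opnorm_le)
  fix v :: "'s cfg \<Rightarrow> complex" assume v: "vnorm d v \<le> 1"
  have eq: "apply_op d (\<lambda>\<sigma> \<tau>. \<Sum>i\<in>I. F i \<sigma> \<tau>) v = (\<lambda>\<sigma>. \<Sum>i\<in>I. apply_op d (F i) v \<sigma>)"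
    by (auto simp: apply_op_def sum_distrib_right intro: sum.swap)
  have "vnorm d (\<lambda>\<sigma>. \<Sum>i\<in>J. apply_op d (F i) v \<sigma>) \<le> (\<Sum>i\<in>J. vnorm d (apply_op d (F i) v))"
    if "finite J" for J
    using that
  proof (induction J rule: finite_induct)
    case empty
    then show ?case by (simp add: vnorm_def)
  next
    case (insert j J)
    then show ?case
      using vnorm_add[of d "apply_op d (F j) v" "\<lambda>\<sigma>. \<Sum>i\<in>J. apply_op d (F i) v \<sigma>"] by simp
  qed
  also have "(\<Sum>i\<in>I. vnorm d (apply_op d (F i) v)) \<le> (\<Sum>i\<in>I. opnorm d (F i))"
  proof (rule sum_mono)
    fix i
    have "vnorm d (apply_op d (F i) v) \<le> opnorm d (F i) * vnorm d v" by (rule opnorm_apply)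
    also have "\<dots> \<le> opnorm d (F i)" using v opnorm_nonneg[of d "F i"] by (simp add: mult_left_le)
    finally show "vnorm d (apply_op d (F i) v) \<le> opnorm d (F i)" .
  qed
  finally show "vnorm d (apply_op d (\<lambda>\<sigma> \<tau>. \<Sum>i\<in>I. F i \<sigma> \<tau>) v) \<le> (\<Sum>i\<in>I. opnorm d (F i))"
    using assms eq by simp
qed

lemma apply_op_mult: "apply_op d (op_mult d A B) v = apply_op d A (apply_op d B v)"
  unfolding apply_op_def op_mult_def
  by (auto simp: sum_distrib_left sum_distrib_right mult.assoc intro: sum.swap)

lemma opnorm_mult:
  fixes d :: "'s::finite \<Rightarrow> nat"
  shows "opnorm d (op_mult d A B) \<le> opnorm d A * opnorm d B"
proof (rule opnorm_le)
  fix v :: "'s cfg \<Rightarrow> complex" assume v: "vnorm d v \<le> 1"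
  have "vnorm d (apply_op d (op_mult d A B) v) \<le> opnorm d A * vnorm d (apply_op d B v)"
    unfolding apply_op_mult by (rule opnorm_apply)
  also have "\<dots> \<le> opnorm d A * (opnorm d B * vnorm d v)"
    by (rule mult_left_mono[OF opnorm_apply opnorm_nonneg])
  also have "\<dots> \<le> opnorm d A * opnorm d B"
    using v opnorm_nonneg[of d A] opnorm_nonneg[of d B]
    by (simp add: mult_left_le mult_left_mono)
  finally show "vnorm d (apply_op d (op_mult d A B) v) \<le> opnorm d A * opnorm d B" .
qed

lemma opnorm_comm:
  fixes d :: "'s::finite \<Rightarrow> nat"
  shows "opnorm d (commutator d A B) \<le> 2 * opnorm d A * opnorm d B"
proof (rule opnorm_le)
  fix v :: "'s cfg \<Rightarrow> complex" assume v: "vnorm d v \<le> 1"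
  have eq: "apply_op d (commutator d A B) v = (\<lambda>\<sigma>. apply_op d (op_mult d A B) v \<sigma> - apply_op d (op_mult d B A) v \<sigma>)"
    by (auto simp: apply_op_def commutator_def algebra_simps sum_subtractf)
  have "vnorm d (apply_op d (commutator d A B) v) \<le> vnorm d (apply_op d (op_mult d A B) v) + vnorm d (apply_op d (op_mult d B A) v)"
    unfolding eq by (rule vnorm_diff)
  also have "\<dots> \<le> opnorm d (op_mult d A B) + opnorm d (op_mult d B A)"
    using opnorm_apply[of d "op_mult d A B" v] opnorm_apply[of d "op_mult d B A" v] v
      opnorm_nonneg[of d "op_mult d A B"] opnorm_nonneg[of d "op_mult d B A"]
    by (smt (verit) mult_left_le)
  also have "\<dots> \<le> opnorm d A * opnorm d B + opnorm d A * opnorm d B"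
    using opnorm_mult[of d A B] opnorm_mult[of d B A] by (simp add: mult.commute)
  also have "\<dots> = 2 * opnorm d A * opnorm d B" by simp
  finally show "vnorm d (apply_op d (commutator d A B) v) \<le> 2 * opnorm d A * opnorm d B" .
qed


lemma le_exp_self: "(t::real) \<le> exp t"
  using exp_ge_add_one_self[of t] by linarith

lemma scalar_bound:
  fixes k k' :: real and n :: nat
  assumes "0 < k'" "k' < k"
  shows "2 * real n * exp (k' * (real n - 1)) \<le> 9 / (k' * (k - k')) * exp (k * real n)"
proof -
  define \<delta> where "\<delta> = k - k'"
  have d0: "0 < \<delta>" using assms by (simp add: \<delta>_def)
  have "2 * (\<delta> * real n) * k' \<le> 2 * exp (\<delta> * real n) * exp k'"
    using le_exp_self[of "\<delta> * real n"] le_exp_self[of k'] assms d0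
    by (intro mult_mono) auto
  also have "\<dots> \<le> 9 * exp (\<delta> * real n) * exp k'" by simp
  finally have A: "2 * (\<delta> * real n) * k' \<le> 9 * exp (\<delta> * real n) * exp k'" .
  have "k' * (real n - 1) = k' * real n - k'" by (simp add: algebra_simps)
  then have e1: "exp (k' * (real n - 1)) = exp (k' * real n) / exp k'"
    by (simp only: exp_diff)
  have e2: "exp (k * real n) = exp (k' * real n) * exp (\<delta> * real n)"
    by (simp add: \<delta>_def left_diff_distrib exp_diff)
  have "2 * real n * exp (k' * (real n - 1)) = (2 * (\<delta> * real n) * k') * (exp (k' * real n) / (exp k' * k' * \<delta>))"
    unfolding e1 using d0 assms by (simp add: field_simps)
  also have "\<dots> \<le> (9 * exp (\<delta> * real n) * exp k') * (exp (k' * real n) / (exp k' * k' * \<delta>))"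
    using A d0 assms by (intro mult_right_mono) auto
  also have "\<dots> = 9 / (k' * (k - k')) * exp (k * real n)"
    using d0 assms by (simp add: e2 \<delta>_def[symmetric] field_simps)
  finally show ?thesis .
qed

definition NN :: "real \<Rightarrow> ('s::finite set \<Rightarrow> real) \<Rightarrow> real" where
  "NN k f = (SUP x. \<Sum>Z\<in>{Z. x \<in> Z}. exp (k * real (card Z)) * f Z)"

lemma NN_upper:
  fixes f :: "'s::finite set \<Rightarrow> real"
  shows "(\<Sum>Z\<in>{Z. x \<in> Z}. exp (k * real (card Z)) * f Z) \<le> NN k f"
  unfolding NN_def by (rule cSUP_upper) (auto intro: bdd_above_finite)

lemma NN_nonneg:
  fixes f :: "'s::finite set \<Rightarrow> real"
  assumes "\<And>Z. 0 \<le> f Z"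
  shows "0 \<le> NN k f"
  by (rule order_trans[OF _ NN_upper[where x=undefined]]) (auto intro!: sum_nonneg mult_nonneg_nonneg assms)

lemma NN_mono_k:
  fixes f :: "'s::finite set \<Rightarrow> real"
  assumes "\<And>Z. 0 \<le> f Z" "k' \<le> k"
  shows "(\<Sum>Z\<in>{Z. x \<in> Z}. exp (k' * real (card Z)) * f Z) \<le> NN k f"
proof -
  have "(\<Sum>Z\<in>{Z. x \<in> Z}. exp (k' * real (card Z)) * f Z) \<le> (\<Sum>Z\<in>{Z. x \<in> Z}. exp (k * real (card Z)) * f Z)"
    using assms by (intro sum_mono mult_right_mono) (auto intro: mult_right_mono)
  then show ?thesis using NN_upper[where x=x and k=k and f=f] by linarith
qed

lemma comb:
  fixes f g :: "'s::finite set \<Rightarrow> real"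
  assumes f0: "\<And>Z. 0 \<le> f Z" and g0: "\<And>Z. 0 \<le> g Z" and k: "0 < k'" "k' < k"
  shows "(\<Sum>p\<in>{p. x \<in> fst p \<and> fst p \<inter> snd p \<noteq> {}}. exp (k' * real (card (fst p \<union> snd p))) * (2 * f (fst p) * g (snd p)))
          \<le> 9 / (k' * (k - k')) * NN k f * NN k g"
proof -
  define C where "C = 9 / (k' * (k - k'))"
  have C0: "0 \<le> C" using k by (simp add: C_def)
  define h where "h Z1 Z2 = exp (k' * real (card (Z1 \<union> Z2))) * (2 * f Z1 * g Z2)" for Z1 Z2
  define kk where "kk Z1 Z2 = 2 * exp (k' * (real (card Z1) - 1)) * f Z1 * (exp (k' * real (card Z2)) * g Z2)" for Z1 Z2
  have kk0: "0 \<le> kk Z1 Z2" for Z1 Z2 using f0 g0 by (simp add: kk_def)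
  have setEq: "{p. x \<in> fst p \<and> fst p \<inter> snd p \<noteq> {}} = Sigma {Z1. x \<in> Z1} (\<lambda>Z1. {Z2. Z1 \<inter> Z2 \<noteq> {}})"
    by auto
  have "(\<Sum>p\<in>{p. x \<in> fst p \<and> fst p \<inter> snd p \<noteq> {}}. exp (k' * real (card (fst p \<union> snd p))) * (2 * f (fst p) * g (snd p)))
     = (\<Sum>Z1\<in>{Z1. x \<in> Z1}. \<Sum>Z2\<in>{Z2. Z1 \<inter> Z2 \<noteq> {}}. h Z1 Z2)"
    unfolding setEq by (simp add: sum.Sigma split_def h_def)
  also have "\<dots> \<le> (\<Sum>Z1\<in>{Z1. x \<in> Z1}. C * exp (k * real (card Z1)) * f Z1 * NN k g)"
  proof (rule sum_mono)
    fix Z1 :: "'s set" assume "Z1 \<in> {Z1. x \<in> Z1}"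
    have "(\<Sum>Z2\<in>{Z2. Z1 \<inter> Z2 \<noteq> {}}. h Z1 Z2) \<le> (\<Sum>Z2\<in>{Z2. Z1 \<inter> Z2 \<noteq> {}}. real (card (Z1 \<inter> Z2)) * kk Z1 Z2)"
    proof (rule sum_mono)
      fix Z2 assume "Z2 \<in> {Z2. Z1 \<inter> Z2 \<noteq> {}}"
      then have ne: "Z1 \<inter> Z2 \<noteq> {}" by simp
      then have c1: "1 \<le> card (Z1 \<inter> Z2)" by (simp add: Suc_le_eq card_gt_0_iff)
      have "card (Z1 \<union> Z2) + card (Z1 \<inter> Z2) = card Z1 + card Z2" using card_Un_Int[of Z1 Z2] by simp
      then have cu: "real (card (Z1 \<union> Z2)) \<le> real (card Z1) + real (card Z2) - 1" using c1 by linarith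
      have "h Z1 Z2 \<le> exp (k' * (real (card Z1) + real (card Z2) - 1)) * (2 * f Z1 * g Z2)"
        unfolding h_def using cu k f0 g0 by (intro mult_right_mono) auto
      also have "\<dots> = kk Z1 Z2"
        by (simp add: kk_def algebra_simps flip: exp_add)
      also have "\<dots> \<le> real (card (Z1 \<inter> Z2)) * kk Z1 Z2"
        using c1 kk0[of Z1 Z2] by (simp add: mult_le_cancel_right1)
      finally show "h Z1 Z2 \<le> real (card (Z1 \<inter> Z2)) * kk Z1 Z2" .
    qed
    also have "\<dots> \<le> (\<Sum>Z2\<in>UNIV. real (card (Z1 \<inter> Z2)) * kk Z1 Z2)"
      by (rule sum_mono2) (auto intro: kk0)
    also have "\<dots> = (\<Sum>Z2\<in>UNIV. \<Sum>y\<in>Z1. if y \<in> Z2 then kk Z1 Z2 else 0)"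
    proof (rule sum.cong[OF refl])
      fix Z2
      have "(\<Sum>y\<in>Z1. if y \<in> Z2 then kk Z1 Z2 else 0) = (\<Sum>y\<in>Z1 \<inter> Z2. kk Z1 Z2)"
        using sum.inter_restrict[of Z1 "\<lambda>_. kk Z1 Z2" Z2] by simp
      then show "real (card (Z1 \<inter> Z2)) * kk Z1 Z2 = (\<Sum>y\<in>Z1. if y \<in> Z2 then kk Z1 Z2 else 0)" by simp
    qed
    also have "\<dots> = (\<Sum>y\<in>Z1. \<Sum>Z2\<in>UNIV. if y \<in> Z2 then kk Z1 Z2 else 0)"
      by (rule sum.swap)
    also have "\<dots> = (\<Sum>y\<in>Z1. \<Sum>Z2\<in>{Z2. y \<in> Z2}. kk Z1 Z2)"
      by (simp add: sum.inter_filter[symmetric])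
    also have "\<dots> = (\<Sum>y\<in>Z1. 2 * exp (k' * (real (card Z1) - 1)) * f Z1 * (\<Sum>Z2\<in>{Z2. y \<in> Z2}. exp (k' * real (card Z2)) * g Z2))"
      by (simp add: kk_def sum_distrib_left)
    also have "\<dots> \<le> (\<Sum>y\<in>Z1. 2 * exp (k' * (real (card Z1) - 1)) * f Z1 * NN k g)"
      using f0 g0 k by (intro sum_mono mult_left_mono NN_mono_k) auto
    also have "\<dots> = (2 * real (card Z1) * exp (k' * (real (card Z1) - 1))) * (f Z1 * NN k g)"
      by simp
    also have "\<dots> \<le> (C * exp (k * real (card Z1))) * (f Z1 * NN k g)"
      unfolding C_def using scalar_bound[OF k, of "card Z1"] f0 NN_nonneg[where f=g and k=k, OF g0]
      by (intro mult_right_mono mult_nonneg_nonneg) auto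
    finally show "(\<Sum>Z2\<in>{Z2. Z1 \<inter> Z2 \<noteq> {}}. h Z1 Z2) \<le> C * exp (k * real (card Z1)) * f Z1 * NN k g"
      by (simp add: mult.assoc)
  qed
  also have "\<dots> = C * NN k g * (\<Sum>Z1\<in>{Z1. x \<in> Z1}. exp (k * real (card Z1)) * f Z1)"
    by (simp add: sum_distrib_left algebra_simps)
  also have "\<dots> \<le> C * NN k g * NN k f"
    using C0 NN_nonneg[where f=g and k=k, OF g0] by (intro mult_left_mono NN_upper) auto
  finally show ?thesis by (simp add: C_def algebra_simps)
qed


theorem lemma6:
  fixes d :: "'s::finite \<Rightarrow> nat" and W \<Theta> :: "'s potential" and \<kappa> \<kappa>' :: real
  assumes "\<forall>x. 0 < d x"
    and "is_potential d W" and "is_potential d \<Theta>"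
    and "0 < \<kappa>'" and "\<kappa>' < \<kappa>"
  shows "pot_norm d \<kappa>' (ad_pot d W \<Theta>)
           \<le> 18 / (\<kappa>' * (\<kappa> - \<kappa>')) * pot_norm d \<kappa> \<Theta> * pot_norm d \<kappa> W"
proof -
  have k: "0 < \<kappa>'" "\<kappa>' < \<kappa>" using assms by auto
  define w where "w Z = opnorm d (W Z)" for Z
  define t where "t Z = opnorm d (\<Theta> Z)" for Z
  have w0: "0 \<le> w Z" for Z by (simp add: w_def opnorm_nonneg)
  have t0: "0 \<le> t Z" for Z by (simp add: t_def opnorm_nonneg)
  have NW: "pot_norm d \<kappa> W = NN \<kappa> w" by (simp add: pot_norm_def NN_def w_def)
  have NT: "pot_norm d \<kappa> \<Theta> = NN \<kappa> t" by (simp add: pot_norm_def NN_def t_def)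
  define C where "C = 9 / (\<kappa>' * (\<kappa> - \<kappa>'))"
  define P where "P Z = {(Z1, Z2). Z1 \<inter> Z2 \<noteq> {} \<and> Z1 \<union> Z2 = Z}" for Z :: "'s set"
  define F where "F p = exp (\<kappa>' * real (card (fst p \<union> snd p))) * (2 * w (fst p) * t (snd p))" for p :: "'s set \<times> 's set"
  have F0: "0 \<le> F p" for p using w0 t0 by (simp add: F_def)
  have adb: "opnorm d (ad_pot d W \<Theta> Z) \<le> (\<Sum>p\<in>P Z. 2 * w (fst p) * t (snd p))" for Z
  proof -
    have "ad_pot d W \<Theta> Z = (\<lambda>\<sigma> \<tau>. \<Sum>p\<in>P Z. commutator d (W (fst p)) (\<Theta> (snd p)) \<sigma> \<tau>)"
      by (simp add: ad_pot_def P_def split_def)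
    then have "opnorm d (ad_pot d W \<Theta> Z) \<le> (\<Sum>p\<in>P Z. opnorm d (commutator d (W (fst p)) (\<Theta> (snd p))))"
      using opnorm_sum[of "P Z" d "\<lambda>p. commutator d (W (fst p)) (\<Theta> (snd p))"] by simp
    also have "\<dots> \<le> (\<Sum>p\<in>P Z. 2 * w (fst p) * t (snd p))"
      by (rule sum_mono) (simp add: w_def t_def opnorm_comm)
    finally show ?thesis .
  qed
  have main: "(\<Sum>Z\<in>{Z. x \<in> Z}. exp (\<kappa>' * real (card Z)) * opnorm d (ad_pot d W \<Theta> Z))
      \<le> 18 / (\<kappa>' * (\<kappa> - \<kappa>')) * NN \<kappa> t * NN \<kappa> w" for x
  proof -
    define S where "S = {p :: 's set \<times> 's set. fst p \<inter> snd p \<noteq> {} \<and> x \<in> fst p \<union> snd p}"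
    define A where "A = {p :: 's set \<times> 's set. x \<in> fst p \<and> fst p \<inter> snd p \<noteq> {}}"
    define B where "B = {p :: 's set \<times> 's set. x \<in> snd p \<and> fst p \<inter> snd p \<noteq> {}}"
    have "(\<Sum>Z\<in>{Z. x \<in> Z}. exp (\<kappa>' * real (card Z)) * opnorm d (ad_pot d W \<Theta> Z))
        \<le> (\<Sum>Z\<in>{Z. x \<in> Z}. exp (\<kappa>' * real (card Z)) * (\<Sum>p\<in>P Z. 2 * w (fst p) * t (snd p)))"
      by (intro sum_mono mult_left_mono adb) auto
    also have "\<dots> = (\<Sum>Z\<in>{Z. x \<in> Z}. \<Sum>p\<in>{p \<in> S. fst p \<union> snd p = Z}. F p)"
    proof (rule sum.cong[OF refl])
      fix Z assume "Z \<in> {Z. x \<in> Z}"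
      then have eq: "{p \<in> S. fst p \<union> snd p = Z} = P Z" by (auto simp: S_def P_def)
      show "exp (\<kappa>' * real (card Z)) * (\<Sum>p\<in>P Z. 2 * w (fst p) * t (snd p)) = (\<Sum>p\<in>{p \<in> S. fst p \<union> snd p = Z}. F p)"
        unfolding eq sum_distrib_left by (rule sum.cong) (auto simp: F_def P_def)
    qed
    also have "\<dots> = sum F S"
      by (rule sum.group) (auto simp: S_def)
    also have "\<dots> \<le> sum F A + sum F B"
    proof -
      have "S = A \<union> B" by (auto simp: S_def A_def B_def)
      then have "sum F S + sum F (A \<inter> B) = sum F A + sum F B"
        by (simp add: sum.union_inter)
      moreover have "0 \<le> sum F (A \<inter> B)" by (rule sum_nonneg) (rule F0)
      ultimately show ?thesis by linarith
    qed
    also have "sum F A \<le> C * NN \<kappa> w * NN \<kappa> t"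
      unfolding A_def F_def C_def by (rule comb[OF w0 t0 k])
    also have "sum F B \<le> C * NN \<kappa> t * NN \<kappa> w"
    proof -
      have "B = prod.swap ` A" by (auto simp: A_def B_def image_iff)
      then have "sum F B = sum (F \<circ> prod.swap) A" by (simp add: sum.reindex)
      also have "\<dots> = (\<Sum>p\<in>A. exp (\<kappa>' * real (card (fst p \<union> snd p))) * (2 * t (fst p) * w (snd p)))"
        by (rule sum.cong) (auto simp: F_def Un_commute)
      also have "\<dots> \<le> C * NN \<kappa> t * NN \<kappa> w"
        unfolding A_def C_def by (rule comb[OF t0 w0 k])
      finally show ?thesis .
    qed
    finally show ?thesis by (simp add: C_def algebra_simps)
  qed
  have L: "pot_norm d \<kappa>' (ad_pot d W \<Theta>) = (SUP x. \<Sum>Z\<in>{Z. x \<in> Z}. exp (\<kappa>' * real (card Z)) * opnorm d (ad_pot d W \<Theta> Z))"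
    by (simp add: pot_norm_def)
  show ?thesis
    unfolding NW NT L
    by (rule cSUP_least) (use main in auto)
qed

end
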